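(* Let $\Sigma$ be a finite alphabet, $L \subseteq \Sigma^*$ regular, and $\mathcal{A}$ a finite automaton for $L$ with $m$ states. Assume that $\mathcal{B} = \mathcal{A}^{\mathsf{R}\mathsf{D}}$ is well-behaved. There are constants $c_m, d_m$ depending only on $m$ such that: (i) if $\mathcal{A}$ is a DFA, then $V_L(n) \leq (2^m \cdot m + 1)\cdot \log n + c_m$ for all sufficiently large $n$; (ii) if $\mathcal{A}$ is an NFA, then $V_L(n) \leq (4^m + 1)\cdot\log n + d_m$ for all sufficiently large $n$.
   Context: $\log x$ denotes $\lfloor \log_2 x\rfloor$. For an NFA $\mathcal{A}$, $\mathcal{A}^\mathsf{R}$ is the NFA obtained by reversing all transitions and swapping initial and final state sets, and $\mathcal{A}^{\mathsf{RD}}$ is the subset-construction DFA of $\mathcal{A}^\mathsf{R}$ restricted to states reachable from its initial state (so it accepts $L^\mathsf{R}$). A DFA $(Q,\Sigma,q_0,\delta,F)$ is well-behaved if every strongly connected component $C$ (inclusion-maximal set of mutually reachable states) reachable from $q_0$ satisfies: for all $q\in C$ and $u,v\in\Sigma^*$ with $|u|=|v|$ and $\delta(q,u),\delta(q,v)\in C$, $\delta(q,u)\in F \iff \delta(q,v)\in F$. Variable-size sliding window model: a streaming algorithm over $\overline\Sigma$ is a deterministic (possibly infinite-state) automaton with an injective encoding $\mathrm{enc}$ of states into bit strings, and $\mathrm{space}(\mathcal{A},w)=\max\{|\mathrm{enc}(\mathcal{A}(u))|: u\text{ prefix of }w\}$. Let $\overline\Sigma=\Sigma\cup\{\downarrow\}$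 and $\mathrm{wnd}\colon\overline\Sigma^*\to\Sigma^*$ given by $\mathrm{wnd}(\varepsilon)=\varepsilon$, $\mathrm{wnd}(ub)=\mathrm{wnd}(u)b$ ($b\in\Sigma$), $\mathrm{wnd}(u\!\downarrow)=\varepsilon$ if $\mathrm{wnd}(u)=\varepsilon$, $\mathrm{wnd}(u\!\downarrow)=v$ if $\mathrm{wnd}(u)=bv$. A variable-size sliding window algorithm for $L$ is a streaming algorithm over $\overline\Sigma$ accepting $\{w:\mathrm{wnd}(w)\in L\}$, with space complexity $v_\mathcal{A}(n)=\max\{\mathrm{space}(\mathcal{A},u): |\mathrm{wnd}(v)|\le n\text{ for all prefixes }v\text{ of }u\}$. $V_L(n)$ is the minimum of $v_\mathcal{A}(n)$ over all variable-size sliding window algorithms $\mathcal{A}$ for $L$. *)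

theory Defs
  imports Complex_Main "HOL-Library.Discrete_Functions" "HOL-Library.Extended_Nat"
begin

(* The letter "\<down>" of the extended alphabet is None,
   a letter b of Sigma is Some b. *)

record nfa =
  states :: "nat set"
  init   :: "nat set"
  final  :: "nat set"
  trans  :: "nat \<Rightarrow> nat \<Rightarrow> nat set"

definition is_nfa :: "nat set \<Rightarrow> nfa \<Rightarrow> bool" where
  "is_nfa \<Sigma> A \<longleftrightarrow> finite (states A) \<and> init A \<subseteq> states A \<and> final A \<subseteq> states A \<and>
     (\<forall>q\<in>states A. \<forall>a\<in>\<Sigma>. trans A q a \<subseteq> states A)"

definition is_dfa :: "nat set \<Rightarrow> nfa \<Rightarrow> bool" where
  "is_dfa \<Sigma> A \<longleftrightarrow> is_nfa \<Sigma> A \<and> card (init A) = 1 \<and>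
     (\<forall>q\<in>states A. \<forall>a\<in>\<Sigma>. card (trans A q a) = 1)"

definition step_set :: "nfa \<Rightarrow> nat set \<Rightarrow> nat \<Rightarrow> nat set" where
  "step_set A S a = (\<Union>q\<in>S. trans A q a)"

definition steps :: "nfa \<Rightarrow> nat set \<Rightarrow> nat list \<Rightarrow> nat set" where
  "steps A S w = fold (\<lambda>a S. step_set A S a) w S"

definition lang :: "nat set \<Rightarrow> nfa \<Rightarrow> nat list set" where
  "lang \<Sigma> A = {w \<in> lists \<Sigma>. steps A (init A) w \<inter> final A \<noteq> {}}"

definition rev_nfa :: "nfa \<Rightarrow> nfa" where
  "rev_nfa A = \<lparr>states = states A, init = final A, final = init A,
                trans = (\<lambda>q a. {p \<in> states A. q \<in> trans A p a})\<rparr>"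

record 's dfa =
  dstates :: "'s set"
  dinit   :: 's
  dtrans  :: "'s \<Rightarrow> nat \<Rightarrow> 's"
  dfinal  :: "'s set"

definition dreach :: "'s dfa \<Rightarrow> 's \<Rightarrow> nat list \<Rightarrow> 's" where
  "dreach D q u = fold (\<lambda>a q. dtrans D q a) u q"

definition rd :: "nat set \<Rightarrow> nfa \<Rightarrow> nat set dfa" where
  "rd \<Sigma> A = \<lparr>dstates = {steps (rev_nfa A) (init (rev_nfa A)) u | u. u \<in> lists \<Sigma>},
              dinit = init (rev_nfa A),
              dtrans = (\<lambda>S a. step_set (rev_nfa A) S a),
              dfinal = {S \<in> {steps (rev_nfa A) (init (rev_nfa A)) u | u. u \<in> lists \<Sigma>}.
                          S \<inter> final (rev_nfa A) \<noteq> {}}\<rparr>"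

definition reach :: "nat set \<Rightarrow> 's dfa \<Rightarrow> 's \<Rightarrow> 's \<Rightarrow> bool" where
  "reach \<Sigma> D p q \<longleftrightarrow> (\<exists>u\<in>lists \<Sigma>. dreach D p u = q)"

definition scc :: "nat set \<Rightarrow> 's dfa \<Rightarrow> 's \<Rightarrow> 's set" where
  "scc \<Sigma> D q = {p. reach \<Sigma> D q p \<and> reach \<Sigma> D p q}"

definition well_behaved :: "nat set \<Rightarrow> 's dfa \<Rightarrow> bool" where
  "well_behaved \<Sigma> D \<longleftrightarrow>
     (\<forall>C. (\<exists>q. reach \<Sigma> D (dinit D) q \<and> C = scc \<Sigma> D q) \<longrightarrow>
        (\<forall>q\<in>C. \<forall>u\<in>lists \<Sigma>. \<forall>v\<in>lists \<Sigma>.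
           length u = length v \<and> dreach D q u \<in> C \<and> dreach D q v \<in> C \<longrightarrow>
           (dreach D q u \<in> dfinal D \<longleftrightarrow> dreach D q v \<in> dfinal D)))"

record 's stream_alg =
  sinit :: 's
  sstep :: "'s \<Rightarrow> nat option \<Rightarrow> 's"
  sacc  :: "'s set"
  senc  :: "'s \<Rightarrow> bool list"

definition ext_alph :: "nat set \<Rightarrow> nat option set" where
  "ext_alph \<Sigma> = Some ` \<Sigma> \<union> {None}"

definition srun :: "'s stream_alg \<Rightarrow> nat option list \<Rightarrow> 's" where
  "srun A w = fold (\<lambda>a s. sstep A s a) w (sinit A)"

definition space :: "'s stream_alg \<Rightarrow> nat option list \<Rightarrow> nat" where
  "space A w = Max {length (senc A (srun A (take i w))) | i. i \<le> length w}"

fun wstep :: "nat option \<Rightarrow> nat list \<Rightarrow> nat list" where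
  "wstep (Some b) x = x @ [b]"
| "wstep None x = tl x"

definition wnd :: "nat option list \<Rightarrow> nat list" where
  "wnd w = fold wstep w []"

definition is_sw_alg :: "nat set \<Rightarrow> nat list set \<Rightarrow> 's stream_alg \<Rightarrow> bool" where
  "is_sw_alg \<Sigma> L A \<longleftrightarrow> inj (senc A) \<and>
     (\<forall>w\<in>lists (ext_alph \<Sigma>). srun A w \<in> sacc A \<longleftrightarrow> wnd w \<in> L)"

definition v_space :: "nat set \<Rightarrow> 's stream_alg \<Rightarrow> nat \<Rightarrow> enat" where
  "v_space \<Sigma> A n = (SUP u \<in> {u \<in> lists (ext_alph \<Sigma>). \<forall>i\<le>length u. length (wnd (take i u)) \<le> n}.
                       enat (space A u))"

text \<open>States are
  taken to be bit strings; this loses no generality since the encoding of any algorithm is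
  injective, so states may be identified with their encodings.\<close>
definition V :: "nat set \<Rightarrow> nat list set \<Rightarrow> nat \<Rightarrow> enat" where
  "V \<Sigma> L n = (INF A \<in> {A :: bool list stream_alg. is_sw_alg \<Sigma> L A}. v_space \<Sigma> A n)"

end

theory Submission
  imports Defs
begin


lemma steps_Nil[simp]: "steps A S [] = S" by (simp add: steps_def)
lemma steps_Cons[simp]: "steps A S (a#u) = steps A (step_set A S a) u" by (simp add: steps_def)
lemma steps_snoc: "steps A S (u@[a]) = step_set A (steps A S u) a" by (simp add: steps_def)
lemma steps_append: "steps A S (u@v) = steps A (steps A S u) v" by (simp add: steps_def)

lemma step_set_states:
  assumes "is_nfa \<Sigma> A" "S \<subseteq> states A" "a \<in> \<Sigma>" shows "step_set A S a \<subseteq> states A"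
  using assms unfolding is_nfa_def step_set_def by blast

lemma steps_states:
  assumes "is_nfa \<Sigma> A" "S \<subseteq> states A" "u \<in> lists \<Sigma>" shows "steps A S u \<subseteq> states A"
  using assms(3,2)
proof (induction u arbitrary: S)
  case (Cons a u) then show ?case using step_set_states[OF assms(1), of S a] by simp
qed simp

lemma duality:
  assumes "is_nfa \<Sigma> A" "S \<subseteq> states A" "w \<in> lists \<Sigma>"
  shows "steps A S w \<inter> P \<noteq> {} \<longleftrightarrow> S \<inter> steps (rev_nfa A) P (rev w) \<noteq> {}"
  using assms(3,2)
proof (induction w arbitrary: S)
  case Nil then show ?case by simp
next
  case (Cons a ws)
  have ss: "step_set A S a \<subseteq> states A" using Cons step_set_states[OF assms(1)] by auto
  have "steps A S (a#ws) \<inter> P \<noteq> {} \<longleftrightarrow> step_set A S a \<inter> steps (rev_nfa A) P (rev ws) \<noteq> {}"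
    using Cons.IH[of "step_set A S a"] ss Cons.prems by simp
  also have "\<dots> \<longleftrightarrow> S \<inter> step_set (rev_nfa A) (steps (rev_nfa A) P (rev ws)) a \<noteq> {}"
    using Cons.prems unfolding step_set_def rev_nfa_def by auto
  also have "\<dots> \<longleftrightarrow> S \<inter> steps (rev_nfa A) P (rev (a#ws)) \<noteq> {}"
    by (simp add: steps_snoc)
  finally show ?case .
qed

lemma dreach_steps: "dreach (rd \<Sigma> A) P u = steps (rev_nfa A) P u"
  by (simp add: dreach_def steps_def rd_def)

lemma dreach_append: "dreach D P (u@v) = dreach D (dreach D P u) v"
  by (simp add: dreach_def)

lemma dstates_rd: "dstates (rd \<Sigma> A) = {steps (rev_nfa A) (final A) u | u. u \<in> lists \<Sigma>}"
  by (simp add: rd_def rev_nfa_def)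

lemma dinit_rd: "dinit (rd \<Sigma> A) = final A" by (simp add: rd_def rev_nfa_def)

lemma dfinal_rd: "dfinal (rd \<Sigma> A) = {S \<in> dstates (rd \<Sigma> A). S \<inter> init A \<noteq> {}}"
  by (simp add: rd_def rev_nfa_def)

lemma dstates_closed:
  assumes "P \<in> dstates (rd \<Sigma> A)" "u \<in> lists \<Sigma>"
  shows "dreach (rd \<Sigma> A) P u \<in> dstates (rd \<Sigma> A)"
proof -
  obtain v where v: "v \<in> lists \<Sigma>" "P = steps (rev_nfa A) (final A) v"
    using assms(1) by (auto simp: dstates_rd)
  then have "dreach (rd \<Sigma> A) P u = steps (rev_nfa A) (final A) (v@u)"
    by (simp add: dreach_steps steps_append)
  then show ?thesis using v assms(2) unfolding dstates_rd
    by (metis (mono_tags, lifting) append_in_lists_conv mem_Collect_eq)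
qed

lemma dinit_in: "dinit (rd \<Sigma> A) \<in> dstates (rd \<Sigma> A)"
  by (auto simp: dstates_rd dinit_rd intro!: exI[of _ "[]"])

lemma dstates_reach: "Q \<in> dstates (rd \<Sigma> A) \<Longrightarrow> reach \<Sigma> (rd \<Sigma> A) (dinit (rd \<Sigma> A)) Q"
  by (auto simp: dstates_rd dinit_rd reach_def dreach_steps)

lemma dstates_sub:
  assumes "is_nfa \<Sigma> A" shows "dstates (rd \<Sigma> A) \<subseteq> Pow (states A)"
proof
  fix S assume "S \<in> dstates (rd \<Sigma> A)"
  then obtain u where "S = steps (rev_nfa A) (final A) u" by (auto simp: dstates_rd)
  moreover have "steps (rev_nfa A) T u \<subseteq> states A" if "T \<subseteq> states A" for T
    using that
  proof (induction u arbitrary: T)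
    case (Cons a u)
    have "step_set (rev_nfa A) T a \<subseteq> states A" by (auto simp: step_set_def rev_nfa_def)
    then show ?case using Cons.IH by simp
  qed simp
  ultimately show "S \<in> Pow (states A)" using assms by (auto simp: is_nfa_def)
qed

lemma finite_dstates: "is_nfa \<Sigma> A \<Longrightarrow> finite (dstates (rd \<Sigma> A))"
  using dstates_sub by (metis finite_Pow_iff finite_subset is_nfa_def)

lemma card_dstates: "is_nfa \<Sigma> A \<Longrightarrow> card (dstates (rd \<Sigma> A)) \<le> 2 ^ card (states A)"
  by (metis card_Pow card_mono dstates_sub finite_Pow_iff is_nfa_def)

lemma reach_refl: "reach \<Sigma> D p p" by (auto simp: reach_def dreach_def intro!: bexI[of _ "[]"])
lemma reach_trans: "reach \<Sigma> D p q \<Longrightarrow> reach \<Sigma> D q r \<Longrightarrow> reach \<Sigma> D p r"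
  unfolding reach_def by (metis append_in_lists_conv dreach_append)



definition run :: "'s dfa \<Rightarrow> 's \<Rightarrow> nat list \<Rightarrow> nat \<Rightarrow> 's" where
  "run D P r t = dreach D P (take t r)"

definition entry :: "nat set \<Rightarrow> 's dfa \<Rightarrow> 's \<Rightarrow> nat list \<Rightarrow> nat \<Rightarrow> bool" where
  "entry \<Sigma> D P r t \<longleftrightarrow> t = 0 \<or> (\<exists>s. t = Suc s \<and> \<not> reach \<Sigma> D (run D P r (Suc s)) (run D P r s))"

definition ef :: "nat set \<Rightarrow> 's dfa \<Rightarrow> 's \<Rightarrow> nat list \<Rightarrow> 's \<Rightarrow> nat option" where
  "ef \<Sigma> D P r Q = (if \<exists>t\<le>length r. entry \<Sigma> D P r t \<and> run D P r t = Q
     then Some (LEAST t. t \<le> length r \<and> entry \<Sigma> D P r t \<and> run D P r t = Q) else None)"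

lemma run_split:
  assumes "s \<le> t" shows "dreach D (run D P r s) (drop s (take t r)) = run D P r t"
proof -
  have "take t r = take s r @ drop s (take t r)"
    using assms by (metis append_take_drop_id min.absorb1 take_take)
  then show ?thesis unfolding run_def by (metis dreach_append)
qed

lemma run_0[simp]: "run D P r 0 = P" by (simp add: run_def dreach_def)

lemma lists_drop_take: "r \<in> lists \<Sigma> \<Longrightarrow> drop s (take t r) \<in> lists \<Sigma>"
  unfolding in_lists_conv_set by (auto dest: in_set_dropD in_set_takeD)

lemma reach_run:
  assumes "r \<in> lists \<Sigma>" "s \<le> t" shows "reach \<Sigma> D (run D P r s) (run D P r t)"
proof -
  have "drop s (take t r) \<in> lists \<Sigma>" using assms(1) by (rule lists_drop_take)
  then show ?thesis unfolding reach_def using run_split[OF assms(2), of D P r] by (intro bexI)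
qed

lemma entry_unique:
  assumes "r \<in> lists \<Sigma>" "entry \<Sigma> D P r t1" "entry \<Sigma> D P r t2" "run D P r t1 = run D P r t2"
  shows "t1 = t2"
proof (rule ccontr)
  assume ne: "t1 \<noteq> t2"
  have *: False if lt: "a < b" and eb: "entry \<Sigma> D P r b" and eq: "run D P r a = run D P r b" for a b
  proof -
    obtain s where s: "b = Suc s" "\<not> reach \<Sigma> D (run D P r (Suc s)) (run D P r s)"
      using lt eb unfolding entry_def by auto
    have "a \<le> s" using lt s by simp
    then have "reach \<Sigma> D (run D P r a) (run D P r s)" by (rule reach_run[OF assms(1)])
    then show False using s eq by simp
  qed
  show False
  proof (cases "t1 < t2")
    case True show ?thesis using *[OF True assms(3) assms(4)] .
  next
    case False then have "t2 < t1" using ne by simp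
    then show ?thesis using *[OF _ assms(2) assms(4)[symmetric]] by simp
  qed
qed

lemma ef_Some:
  assumes "r \<in> lists \<Sigma>"
  shows "ef \<Sigma> D P r Q = Some t \<longleftrightarrow> t \<le> length r \<and> entry \<Sigma> D P r t \<and> run D P r t = Q"
proof
  assume h: "ef \<Sigma> D P r Q = Some t"
  then have ex: "\<exists>t\<le>length r. entry \<Sigma> D P r t \<and> run D P r t = Q" unfolding ef_def by (auto split: if_splits)
  then have "t = (LEAST t. t \<le> length r \<and> entry \<Sigma> D P r t \<and> run D P r t = Q)"
    using h unfolding ef_def by auto
  then show "t \<le> length r \<and> entry \<Sigma> D P r t \<and> run D P r t = Q"
    using ex by (metis (mono_tags, lifting) LeastI)
next
  assume h: "t \<le> length r \<and> entry \<Sigma> D P r t \<and> run D P r t = Q"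
  have "(LEAST t. t \<le> length r \<and> entry \<Sigma> D P r t \<and> run D P r t = Q) = t"
  proof (rule Least_equality)
    show "t \<le> length r \<and> entry \<Sigma> D P r t \<and> run D P r t = Q" using h by simp
  next
    fix y assume "y \<le> length r \<and> entry \<Sigma> D P r y \<and> run D P r y = Q"
    then have "y = t" using entry_unique[OF assms, of D P y t] h by simp
    then show "t \<le> y" by simp
  qed
  then show "ef \<Sigma> D P r Q = Some t" using h unfolding ef_def by auto
qed

lemma stay:
  assumes "r \<in> lists \<Sigma>" "t0 \<le> t" "\<forall>s. t0 < s \<and> s \<le> t \<longrightarrow> \<not> entry \<Sigma> D P r s"
  shows "reach \<Sigma> D (run D P r t) (run D P r t0)"
  using assms(2,3)
proof (induction t)
  case 0 then show ?case by (simp add: reach_refl)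
next
  case (Suc t)
  show ?case
  proof (cases "t0 = Suc t")
    case True then show ?thesis by (simp add: reach_refl)
  next
    case False
    then have "t0 \<le> t" using Suc by simp
    then have ih: "reach \<Sigma> D (run D P r t) (run D P r t0)" using Suc by simp
    have "\<not> entry \<Sigma> D P r (Suc t)" using Suc.prems False by simp
    then have "reach \<Sigma> D (run D P r (Suc t)) (run D P r t)" unfolding entry_def by auto
    then show ?thesis using ih reach_trans by metis
  qed
qed

lemma last_entry:
  "\<exists>t0\<le>t. entry \<Sigma> D P r t0 \<and> (\<forall>s. t0 < s \<and> s \<le> t \<longrightarrow> \<not> entry \<Sigma> D P r s)"
proof (induction t)
  case 0 then show ?case by (auto simp: entry_def)
next
  case (Suc t)
  then obtain t0 where t0: "t0 \<le> t" "entry \<Sigma> D P r t0" "\<forall>s. t0 < s \<and> s \<le> t \<longrightarrow> \<not> entry \<Sigma> D P r s" by blast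
  show ?case
  proof (cases "entry \<Sigma> D P r (Suc t)")
    case True then show ?thesis by (intro exI[of _ "Suc t"]) auto
  next
    case False
    have "\<forall>s. t0 < s \<and> s \<le> Suc t \<longrightarrow> \<not> entry \<Sigma> D P r s"
    proof (intro allI impI)
      fix s assume "t0 < s \<and> s \<le> Suc t"
      then show "\<not> entry \<Sigma> D P r s" using False t0(3) by (cases "s = Suc t") auto
    qed
    then show ?thesis using t0 by (intro exI[of _ t0]) simp
  qed
qed

lemma KL:
  assumes wb: "well_behaved \<Sigma> D" and rP: "reach \<Sigma> D (dinit D) P"
    and r: "r \<in> lists \<Sigma>" and r': "r' \<in> lists \<Sigma>" and len: "length r = length r'"
    and efe: "ef \<Sigma> D P r = ef \<Sigma> D P r'" and t: "t \<le> length r"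
  shows "run D P r t \<in> dfinal D \<longleftrightarrow> run D P r' t \<in> dfinal D"
proof -
  obtain t0 where t0: "t0 \<le> t" "entry \<Sigma> D P r t0" "\<forall>s. t0 < s \<and> s \<le> t \<longrightarrow> \<not> entry \<Sigma> D P r s"
    using last_entry[where t=t and \<Sigma>=\<Sigma> and D=D and P=P and r=r] by blast
  define Q where "Q = run D P r t0"
  have t0l: "t0 \<le> length r" using t0(1) t by simp
  have "ef \<Sigma> D P r Q = Some t0" using ef_Some[OF r, of D P Q t0] t0(2) t0l Q_def by simp
  then have "ef \<Sigma> D P r' Q = Some t0" using efe by simp
  then have e': "entry \<Sigma> D P r' t0" "run D P r' t0 = Q" using ef_Some[OF r', of D P Q t0] by simp_all
  have ne': "\<forall>s. t0 < s \<and> s \<le> t \<longrightarrow> \<not> entry \<Sigma> D P r' s"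
  proof (intro allI impI)
    fix s assume s: "t0 < s \<and> s \<le> t"
    show "\<not> entry \<Sigma> D P r' s"
    proof
      assume es: "entry \<Sigma> D P r' s"
      have sl: "s \<le> length r'" using s t len by simp
      have "ef \<Sigma> D P r' (run D P r' s) = Some s" using ef_Some[OF r', of D P "run D P r' s" s] es sl by simp
      then have "ef \<Sigma> D P r (run D P r' s) = Some s" using efe by simp
      then have "entry \<Sigma> D P r s" using ef_Some[OF r, of D P "run D P r' s" s] by simp
      then show False using t0(3) s by blast
    qed
  qed
  have b1: "reach \<Sigma> D (run D P r t) Q" using stay[OF r t0(1) t0(3)] Q_def by simp
  have b2: "reach \<Sigma> D (run D P r' t) Q" using stay[OF r' t0(1) ne'] e'(2) by simp
  have f1: "reach \<Sigma> D Q (run D P r t)" using reach_run[OF r t0(1), of D P] Q_def by simp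
  have f2: "reach \<Sigma> D Q (run D P r' t)" using reach_run[OF r' t0(1), of D P] e'(2) by simp
  have "reach \<Sigma> D P Q" using reach_run[OF r, of 0 t0 D P] Q_def by simp
  then have rQ: "reach \<Sigma> D (dinit D) Q" using reach_trans[OF rP] by blast
  define C where "C = scc \<Sigma> D Q"
  have QC: "Q \<in> C" by (simp add: C_def scc_def reach_refl)
  define u where "u = drop t0 (take t r)"
  define v where "v = drop t0 (take t r')"
  have u: "u \<in> lists \<Sigma>" "v \<in> lists \<Sigma>" using r r' unfolding u_def v_def
    by (simp_all add: lists_drop_take)
  have lu: "length u = length v" using len t unfolding u_def v_def by simp
  have du: "dreach D Q u = run D P r t" using run_split[OF t0(1), of D P r] Q_def u_def by simp
  have dv: "dreach D Q v = run D P r' t" using run_split[OF t0(1), of D P r'] e'(2) v_def by simp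
  have inC1: "dreach D Q u \<in> C" using du b1 f1 unfolding C_def scc_def by simp
  have inC2: "dreach D Q v \<in> C" using dv b2 f2 unfolding C_def scc_def by simp
  have ex: "\<exists>q. reach \<Sigma> D (dinit D) q \<and> C = scc \<Sigma> D q" using rQ C_def by blast
  have all: "\<forall>q\<in>C. \<forall>u\<in>lists \<Sigma>. \<forall>v\<in>lists \<Sigma>.
           length u = length v \<and> dreach D q u \<in> C \<and> dreach D q v \<in> C \<longrightarrow>
           (dreach D q u \<in> dfinal D \<longleftrightarrow> dreach D q v \<in> dfinal D)"
    using mp[OF spec[OF wb[unfolded well_behaved_def], of C] ex] .
  have "dreach D Q u \<in> dfinal D \<longleftrightarrow> dreach D Q v \<in> dfinal D"
    using mp[OF bspec[OF bspec[OF bspec[OF all QC] u(1)] u(2)]] lu inC1 inC2 by blast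
  then show ?thesis using du dv by simp
qed



section \<open>Fixed width encoding\<close>

lemma high_bit: "(k::nat) < 2^w \<Longrightarrow> w \<le> i \<Longrightarrow> \<not> bit k i"
proof -
  assume a: "k < 2^w" "w \<le> i"
  have "(2::nat)^w \<le> 2^i" using a(2) by simp
  then have "k < 2^i" using a(1) by linarith
  then have "k div 2^i = 0" by simp
  then show ?thesis by (simp add: bit_nat_def)
qed

definition fw :: "nat \<Rightarrow> nat \<Rightarrow> bool list" where
  "fw w k = map (bit k) [0..<w]"

lemma length_fw[simp]: "length (fw w k) = w" by (simp add: fw_def)

lemma fw_inj:
  assumes "k1 < 2^w" "k2 < 2^w" "fw w k1 = fw w k2" shows "k1 = k2"
proof (rule bit_eq_iff[THEN iffD2], intro allI impI)
  fix i
  show "bit k1 i = bit k2 i"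
  proof (cases "i < w")
    case True
    have "fw w k1 ! i = fw w k2 ! i" using assms(3) by simp
    then show ?thesis using True by (simp add: fw_def)
  next
    case False then show ?thesis using high_bit assms(1,2) by (metis not_le)
  qed
qed

lemma length_concat_fw: "length (concat (map (fw w) xs)) = length xs * w"
  by (induction xs) auto

lemma concat_fw_inj:
  "\<forall>k\<in>set xs. k < 2^w \<Longrightarrow> \<forall>k\<in>set ys. k < 2^w \<Longrightarrow> length xs = length ys \<Longrightarrow>
   concat (map (fw w) xs) = concat (map (fw w) ys) \<Longrightarrow> xs = ys"
proof (induction xs arbitrary: ys)
  case Nil then show ?case by simp
next
  case (Cons a xs)
  then obtain b ys' where ys: "ys = b # ys'" by (cases ys) auto
  have "fw w a @ concat (map (fw w) xs) = fw w b @ concat (map (fw w) ys')"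
    using Cons.prems(4) ys by simp
  then have e: "fw w a = fw w b" "concat (map (fw w) xs) = concat (map (fw w) ys')"
    by (simp_all add: append_eq_append_conv)
  have "a = b" using fw_inj[OF _ _ e(1)] Cons.prems(1,2) ys by simp
  moreover have "xs = ys'" using Cons.IH[OF _ _ _ e(2)] Cons.prems ys by simp
  ultimately show ?case using ys by simp
qed

section \<open>Separating family\<close>

lemma sep_family:
  assumes "finite X"
  shows "\<exists>G\<subseteq>R. finite G \<and> card G \<le> card X \<and>
    (\<forall>D1\<in>X. \<forall>D2\<in>X. (\<forall>P\<in>G. h D1 P = h D2 P) \<longrightarrow> (\<forall>P\<in>R. h D1 P = h D2 P))"
  using assms
proof (induction X rule: finite_induct)
  case empty then show ?case by (intro exI[of _ "{}"]) simp
next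
  case (insert x X)
  obtain G where G: "G \<subseteq> R" "finite G" "card G \<le> card X"
    "\<forall>D1\<in>X. \<forall>D2\<in>X. (\<forall>P\<in>G. h D1 P = h D2 P) \<longrightarrow> (\<forall>P\<in>R. h D1 P = h D2 P)"
    using insert.IH by blast
  have cX: "card (insert x X) = Suc (card X)" using insert by simp
  show ?case
  proof (cases "\<exists>q\<in>X. (\<forall>P\<in>G. h x P = h q P) \<and> \<not> (\<forall>P\<in>R. h x P = h q P)")
    case True
    then obtain q1 P1 where q1: "q1 \<in> X" "\<forall>P\<in>G. h x P = h q1 P" "P1 \<in> R" "h x P1 \<noteq> h q1 P1" by blast
    define G' where "G' = insert P1 G"
    have key: "\<forall>P\<in>R. h x P = h q P" if q: "q \<in> X" "\<forall>P\<in>G'. h x P = h q P" for q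
    proof (rule ccontr)
      assume nr: "\<not> (\<forall>P\<in>R. h x P = h q P)"
      have "\<forall>P\<in>G. h q P = h q1 P" using q(2) q1(2) G'_def by (metis insertCI)
      then have "\<forall>P\<in>R. h q P = h q1 P" using G(4) q(1) q1(1) by blast
      then have "h q P1 = h q1 P1" using q1(3) by blast
      moreover have "h x P1 = h q P1" using q(2) G'_def by blast
      ultimately show False using q1(4) by metis
    qed
    have g1: "G' \<subseteq> R" "finite G'" "card G' \<le> card (insert x X)"
      using G q1(3) cX unfolding G'_def by (auto simp: card_insert_if)
    have g2: "\<forall>D1\<in>insert x X. \<forall>D2\<in>insert x X. (\<forall>P\<in>G'. h D1 P = h D2 P) \<longrightarrow> (\<forall>P\<in>R. h D1 P = h D2 P)"
    proof (intro ballI impI)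
      fix D1 D2 P assume D: "D1 \<in> insert x X" "D2 \<in> insert x X" "\<forall>P\<in>G'. h D1 P = h D2 P" "P \<in> R"
      show "h D1 P = h D2 P"
      proof (cases "D1 = x")
        case True
        show ?thesis
        proof (cases "D2 = x")
          case True then show ?thesis using \<open>D1 = x\<close> by simp
        next
          case False then have "D2 \<in> X" using D by simp
          then show ?thesis using key[of D2] D \<open>D1 = x\<close> by metis
        qed
      next
        case False then have D1X: "D1 \<in> X" using D by simp
        show ?thesis
        proof (cases "D2 = x")
          case True
          have "\<forall>P\<in>G'. h x P = h D1 P" using D(3) True by metis
          then show ?thesis using key[OF D1X] D(4) True by metis
        next
          case False then have "D2 \<in> X" using D by simp
          then show ?thesis using G(4) D1X D unfolding G'_def by (metis insertCI)
        qed
      qed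
    qed
    show ?thesis by (rule exI[of _ G']) (intro conjI g1 g2)
  next
    case False
    have nk: "\<forall>q\<in>X. (\<forall>P\<in>G. h x P = h q P) \<longrightarrow> (\<forall>P\<in>R. h x P = h q P)"
      using False by blast
    have "\<forall>D1\<in>insert x X. \<forall>D2\<in>insert x X. (\<forall>P\<in>G. h D1 P = h D2 P) \<longrightarrow> (\<forall>P\<in>R. h D1 P = h D2 P)"
    proof (intro ballI impI)
      fix D1 D2 P assume D: "D1 \<in> insert x X" "D2 \<in> insert x X" "\<forall>P\<in>G. h D1 P = h D2 P" "P \<in> R"
      show "h D1 P = h D2 P"
      proof (cases "D1 = x")
        case True
        show ?thesis
        proof (cases "D2 = x")
          case True then show ?thesis using \<open>D1 = x\<close> by simp
        next
          case False then have "D2 \<in> X" using D by simp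
          then show ?thesis using nk D \<open>D1 = x\<close> by metis
        qed
      next
        case False then have D1X: "D1 \<in> X" using D by simp
        show ?thesis
        proof (cases "D2 = x")
          case True
          have "\<forall>P\<in>G. h x P = h D1 P" using D(3) True by metis
          then have "\<forall>P\<in>R. h x P = h D1 P" using nk D1X by blast
          then show ?thesis using D(4) True by metis
        next
          case False then have "D2 \<in> X" using D by simp
          then show ?thesis using G(4) D1X D by metis
        qed
      qed
    qed
    note p = this
    have c: "card G \<le> card (insert x X)" using G(3) cX by simp
    show ?thesis by (rule exI[of _ G]) (intro conjI G(1) G(2) c p)
  qed
qed



definition encopt :: "nat option \<Rightarrow> nat" where
  "encopt z = (case z of None \<Rightarrow> 0 | Some t \<Rightarrow> Suc t)"

lemma encopt_inj: "encopt a = encopt b \<Longrightarrow> a = b"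
  by (cases a; cases b) (auto simp: encopt_def)

lemma lists_drop: "x \<in> lists \<Sigma> \<Longrightarrow> drop k x \<in> lists \<Sigma>"
  unfolding in_lists_conv_set by (auto dest: in_set_dropD)
lemma lists_take: "x \<in> lists \<Sigma> \<Longrightarrow> take k x \<in> lists \<Sigma>"
  unfolding in_lists_conv_set by (auto dest: in_set_takeD)
lemma lists_tl: "x \<in> lists \<Sigma> \<Longrightarrow> tl x \<in> lists \<Sigma>"
  by (cases x) auto

lemma wnd_snoc: "wnd (w@[a]) = wstep a (wnd w)" by (simp add: wnd_def)
lemma srun_snoc: "srun S (w@[a]) = sstep S (srun S w) a" by (simp add: srun_def)

locale swsetup =
  fixes \<Sigma> :: "nat set" and A :: nfa and gs ds :: "nat set list"
  assumes isnfa: "is_nfa \<Sigma> A" and wb: "well_behaved \<Sigma> (rd \<Sigma> A)"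
    and gs: "set gs \<subseteq> dstates (rd \<Sigma> A)" and ds: "set ds = dstates (rd \<Sigma> A)"
    and sep: "\<forall>w1\<in>lists \<Sigma>. \<forall>w2\<in>lists \<Sigma>.
       (\<forall>P\<in>set gs. (steps A (init A) w1 \<inter> P \<noteq> {}) = (steps A (init A) w2 \<inter> P \<noteq> {})) \<longrightarrow>
       (\<forall>P\<in>dstates (rd \<Sigma> A). (steps A (init A) w1 \<inter> P \<noteq> {}) = (steps A (init A) w2 \<inter> P \<noteq> {}))"
begin

definition eqv :: "nat list \<Rightarrow> nat list \<Rightarrow> bool" where
  "eqv x y \<longleftrightarrow> length x = length y \<and> (\<forall>k\<le>length x. \<forall>P\<in>dstates (rd \<Sigma> A).
     (steps A (init A) (drop k x) \<inter> P \<noteq> {}) = (steps A (init A) (drop k y) \<inter> P \<noteq> {}))"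

lemma eqv_refl: "eqv x x" by (simp add: eqv_def)
lemma eqv_sym: "eqv x y \<Longrightarrow> eqv y x" by (simp add: eqv_def)
lemma eqv_trans: "eqv x y \<Longrightarrow> eqv y z \<Longrightarrow> eqv x z" by (simp add: eqv_def)

lemma init_sub: "init A \<subseteq> states A" using isnfa by (simp add: is_nfa_def)

lemma eqv_snoc:
  assumes x: "x \<in> lists \<Sigma>" and y: "y \<in> lists \<Sigma>" and a: "a \<in> \<Sigma>" and e: "eqv x y"
  shows "eqv (x@[a]) (y@[a])"
proof -
  have len: "length x = length y" using e by (simp add: eqv_def)
  have "(steps A (init A) (drop k (x@[a])) \<inter> P \<noteq> {}) = (steps A (init A) (drop k (y@[a])) \<inter> P \<noteq> {})"
    if k: "k \<le> length (x@[a])" and P: "P \<in> dstates (rd \<Sigma> A)" for k P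
  proof (cases "k \<le> length x")
    case True
    have dx: "drop k (x@[a]) = drop k x @ [a]" and dy: "drop k (y@[a]) = drop k y @ [a]"
      using True len by simp_all
    define P' where "P' = step_set (rev_nfa A) P a"
    have P': "P' \<in> dstates (rd \<Sigma> A)"
      using dstates_closed[OF P, of "[a]"] a unfolding P'_def by (simp add: dreach_steps)
    have dual: "(step_set A S a \<inter> P \<noteq> {}) = (S \<inter> P' \<noteq> {})" if "S \<subseteq> states A" for S
      using duality[OF isnfa that, of "[a]" P] a unfolding P'_def by simp
    have sx: "steps A (init A) (drop k x) \<subseteq> states A"
      using steps_states[OF isnfa init_sub lists_drop[OF x]] .
    have sy: "steps A (init A) (drop k y) \<subseteq> states A"
      using steps_states[OF isnfa init_sub lists_drop[OF y]] .
    have "(steps A (init A) (drop k x) \<inter> P' \<noteq> {}) = (steps A (init A) (drop k y) \<inter> P' \<noteq> {})"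
      using e True P' unfolding eqv_def by blast
    then show ?thesis unfolding dx dy steps_snoc using dual[OF sx] dual[OF sy] by simp
  next
    case False
    then have "k = Suc (length x)" using k by simp
    then show ?thesis using len by simp
  qed
  then show ?thesis using len unfolding eqv_def by simp
qed

lemma eqv_tl:
  assumes e: "eqv x y" shows "eqv (tl x) (tl y)"
proof (cases "x = []")
  case True then have "y = []" using e by (simp add: eqv_def)
  then show ?thesis using True by (simp add: eqv_refl)
next
  case False
  have len: "length x = length y" using e by (simp add: eqv_def)
  have "(steps A (init A) (drop k (tl x)) \<inter> P \<noteq> {}) = (steps A (init A) (drop k (tl y)) \<inter> P \<noteq> {})"
    if k: "k \<le> length (tl x)" and P: "P \<in> dstates (rd \<Sigma> A)" for k P
  proof -
    have "Suc k \<le> length x" using k False by (cases x) auto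
    then have "(steps A (init A) (drop (Suc k) x) \<inter> P \<noteq> {}) = (steps A (init A) (drop (Suc k) y) \<inter> P \<noteq> {})"
      using e P unfolding eqv_def by blast
    then show ?thesis by (simp add: drop_Suc)
  qed
  then show ?thesis using len unfolding eqv_def by simp
qed

lemma eqv_lang:
  assumes "x \<in> lists \<Sigma>" "y \<in> lists \<Sigma>" "eqv x y" "x \<in> lang \<Sigma> A" shows "y \<in> lang \<Sigma> A"
proof -
  have "final A \<in> dstates (rd \<Sigma> A)" using dinit_in[of \<Sigma> A] by (simp add: dinit_rd)
  then have "(steps A (init A) x \<inter> final A \<noteq> {}) = (steps A (init A) y \<inter> final A \<noteq> {})"
    using assms(3) unfolding eqv_def by (metis drop0 le0)
  then show ?thesis using assms by (simp add: lang_def)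
qed

definition canon :: "nat list \<Rightarrow> nat list" where
  "canon x = (SOME y. y \<in> lists \<Sigma> \<and> eqv y x)"

lemma canon: "x \<in> lists \<Sigma> \<Longrightarrow> canon x \<in> lists \<Sigma> \<and> eqv (canon x) x"
  unfolding canon_def by (rule someI[of _ x]) (simp add: eqv_refl)

lemma canon_len: "x \<in> lists \<Sigma> \<Longrightarrow> length (canon x) = length x"
  using canon by (simp add: eqv_def)

lemma canon_cong: "eqv x y \<Longrightarrow> canon x = canon y"
proof -
  assume e: "eqv x y"
  have "(\<lambda>z. z \<in> lists \<Sigma> \<and> eqv z x) = (\<lambda>z. z \<in> lists \<Sigma> \<and> eqv z y)"
    using e eqv_trans eqv_sym by blast
  then show ?thesis unfolding canon_def by simp
qed

definition slist :: "nat list \<Rightarrow> nat list" where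
  "slist x = length x # map (\<lambda>(P,Q). encopt (ef \<Sigma> (rd \<Sigma> A) P (rev x) Q)) (List.product gs ds)"

lemma length_slist: "length (slist x) = Suc (length gs * length ds)"
  by (simp add: slist_def)

lemma rev_lists: "x \<in> lists \<Sigma> \<Longrightarrow> rev x \<in> lists \<Sigma>"
  by (simp add: in_lists_conv_set)

lemma slist_bound:
  assumes x: "x \<in> lists \<Sigma>" shows "\<forall>e\<in>set (slist x). e \<le> Suc (length x)"
proof
  fix e assume "e \<in> set (slist x)"
  then consider "e = length x" | P Q where "e = encopt (ef \<Sigma> (rd \<Sigma> A) P (rev x) Q)"
    unfolding slist_def by auto
  then show "e \<le> Suc (length x)"
  proof cases
    case 1 then show ?thesis by simp
  next
    case (2 P Q)
    show ?thesis
    proof (cases "ef \<Sigma> (rd \<Sigma> A) P (rev x) Q")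
      case None then show ?thesis using 2 by (simp add: encopt_def)
    next
      case (Some t)
      then have "t \<le> length (rev x)" using ef_Some[OF rev_lists[OF x], of "rd \<Sigma> A" P Q t] by simp
      then show ?thesis using 2 Some by (simp add: encopt_def)
    qed
  qed
qed

lemma bit_run:
  assumes P: "P \<in> dstates (rd \<Sigma> A)" and x: "x \<in> lists \<Sigma>" and k: "k \<le> length x"
  shows "(run (rd \<Sigma> A) P (rev x) (length x - k) \<in> dfinal (rd \<Sigma> A)) =
         (steps A (init A) (drop k x) \<inter> P \<noteq> {})"
proof -
  have "run (rd \<Sigma> A) P (rev x) (length x - k) = dreach (rd \<Sigma> A) P (rev (drop k x))"
    by (simp add: run_def rev_drop)
  also have "\<dots> = steps (rev_nfa A) P (rev (drop k x))" by (simp add: dreach_steps)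
  finally have eq: "run (rd \<Sigma> A) P (rev x) (length x - k) = steps (rev_nfa A) P (rev (drop k x))" .
  have T: "steps (rev_nfa A) P (rev (drop k x)) \<in> dstates (rd \<Sigma> A)"
    using dstates_closed[OF P rev_lists[OF lists_drop[OF x]]] by (simp add: dreach_steps)
  have "(steps A (init A) (drop k x) \<inter> P \<noteq> {}) = (init A \<inter> steps (rev_nfa A) P (rev (drop k x)) \<noteq> {})"
    using duality[OF isnfa init_sub lists_drop[OF x]] .
  then show ?thesis unfolding eq dfinal_rd using T by blast
qed

lemma ef_dstates:
  assumes P: "P \<in> dstates (rd \<Sigma> A)" and r: "r \<in> lists \<Sigma>" and e: "ef \<Sigma> (rd \<Sigma> A) P r Q = Some t"
  shows "Q \<in> dstates (rd \<Sigma> A)"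
proof -
  have "run (rd \<Sigma> A) P r t = Q" using ef_Some[OF r, of "rd \<Sigma> A" P Q t] e by simp
  then show ?thesis using dstates_closed[OF P lists_take[OF r], of t] by (simp add: run_def)
qed

lemma slist_eqv:
  assumes x: "x \<in> lists \<Sigma>" and y: "y \<in> lists \<Sigma>" and s: "slist x = slist y"
  shows "eqv x y"
proof -
  have len: "length x = length y" using s by (simp add: slist_def)
  have m: "\<forall>z\<in>set (List.product gs ds). (\<lambda>(P,Q). encopt (ef \<Sigma> (rd \<Sigma> A) P (rev x) Q)) z =
                                        (\<lambda>(P,Q). encopt (ef \<Sigma> (rd \<Sigma> A) P (rev y) Q)) z"
    using s unfolding slist_def by (simp only: list.inject map_eq_conv) (rule conjunct2)
  have efe: "ef \<Sigma> (rd \<Sigma> A) P (rev x) = ef \<Sigma> (rd \<Sigma> A) P (rev y)" if P: "P \<in> set gs" for P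
  proof
    fix Q
    show "ef \<Sigma> (rd \<Sigma> A) P (rev x) Q = ef \<Sigma> (rd \<Sigma> A) P (rev y) Q"
    proof (cases "Q \<in> dstates (rd \<Sigma> A)")
      case True
      then have PQ: "(P,Q) \<in> set (List.product gs ds)" using P ds by simp
      have "encopt (ef \<Sigma> (rd \<Sigma> A) P (rev x) Q) = encopt (ef \<Sigma> (rd \<Sigma> A) P (rev y) Q)"
        using bspec[OF m PQ] by simp
      then show ?thesis by (rule encopt_inj)
    next
      case False
      have P': "P \<in> dstates (rd \<Sigma> A)" using P gs by blast
      have "ef \<Sigma> (rd \<Sigma> A) P (rev x) Q = None"
        using ef_dstates[OF P' rev_lists[OF x]] False by (cases "ef \<Sigma> (rd \<Sigma> A) P (rev x) Q") auto
      moreover have "ef \<Sigma> (rd \<Sigma> A) P (rev y) Q = None"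
        using ef_dstates[OF P' rev_lists[OF y]] False by (cases "ef \<Sigma> (rd \<Sigma> A) P (rev y) Q") auto
      ultimately show ?thesis by simp
    qed
  qed
  have "(steps A (init A) (drop k x) \<inter> P \<noteq> {}) = (steps A (init A) (drop k y) \<inter> P \<noteq> {})"
    if k: "k \<le> length x" and P: "P \<in> dstates (rd \<Sigma> A)" for k P
  proof -
    have "\<forall>P\<in>set gs. (steps A (init A) (drop k x) \<inter> P \<noteq> {}) = (steps A (init A) (drop k y) \<inter> P \<noteq> {})"
    proof
      fix P assume Pg: "P \<in> set gs"
      then have P': "P \<in> dstates (rd \<Sigma> A)" using gs by blast
      have "(run (rd \<Sigma> A) P (rev x) (length x - k) \<in> dfinal (rd \<Sigma> A)) =
            (run (rd \<Sigma> A) P (rev y) (length x - k) \<in> dfinal (rd \<Sigma> A))"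
        by (rule KL[OF wb dstates_reach[OF P'] rev_lists[OF x] rev_lists[OF y]])
           (use len efe[OF Pg] in simp_all)
      then show "(steps A (init A) (drop k x) \<inter> P \<noteq> {}) = (steps A (init A) (drop k y) \<inter> P \<noteq> {})"
        using bit_run[OF P' x k] bit_run[OF P' y] k len by simp
    qed
    then have "\<forall>P\<in>dstates (rd \<Sigma> A). (steps A (init A) (drop k x) \<inter> P \<noteq> {}) = (steps A (init A) (drop k y) \<inter> P \<noteq> {})"
      using mp[OF bspec[OF bspec[OF sep lists_drop[OF x, of k]] lists_drop[OF y, of k]]] by blast
    then show ?thesis using P by blast
  qed
  then show ?thesis using len unfolding eqv_def by (intro conjI allI impI ballI) simp_all
qed

end



context swsetup begin

definition code :: "nat list \<Rightarrow> bool list" where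
  "code x = concat (map (fw (Suc (floor_log (Suc (length x))))) (slist (canon x)))"

lemma code_length: "x \<in> lists \<Sigma> \<Longrightarrow>
  length (code x) = Suc (length gs * length ds) * Suc (floor_log (Suc (length x)))"
  by (simp add: code_def length_concat_fw length_slist)

lemma lt_pow: "e \<le> Suc n \<Longrightarrow> e < 2 ^ Suc (floor_log (Suc n))"
  using floor_log_exp2_gt[of "Suc n"] by simp

lemma code_eq:
  assumes x: "x \<in> lists \<Sigma>" and y: "y \<in> lists \<Sigma>"
  shows "code x = code y \<longleftrightarrow> eqv x y"
proof
  assume e: "eqv x y"
  then have "canon x = canon y" by (rule canon_cong)
  moreover have "length x = length y" using e by (simp add: eqv_def)
  ultimately show "code x = code y" by (simp add: code_def)
next
  assume c: "code x = code y"
  then have "Suc (length gs * length ds) * Suc (floor_log (Suc (length x))) =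
             Suc (length gs * length ds) * Suc (floor_log (Suc (length y)))"
    using code_length[OF x] code_length[OF y] by simp
  then have w: "floor_log (Suc (length x)) = floor_log (Suc (length y))"
    by (metis mult_left_cancel Zero_not_Suc Suc_inject)
  define w where "w = Suc (floor_log (Suc (length x)))"
  have cx: "canon x \<in> lists \<Sigma>" "length (canon x) = length x" using canon[OF x] canon_len[OF x] by simp_all
  have cy: "canon y \<in> lists \<Sigma>" "length (canon y) = length y" using canon[OF y] canon_len[OF y] by simp_all
  have bx: "\<forall>k\<in>set (slist (canon x)). k < 2^w"
    using slist_bound[OF cx(1)] cx(2) lt_pow unfolding w_def by simp
  have by': "\<forall>k\<in>set (slist (canon y)). k < 2^w"
    using slist_bound[OF cy(1)] cy(2) lt_pow w unfolding w_def by simp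
  have "concat (map (fw w) (slist (canon x))) = concat (map (fw w) (slist (canon y)))"
    using c w unfolding code_def w_def by simp
  then have "slist (canon x) = slist (canon y)"
    using concat_fw_inj[OF bx by'] by (simp add: length_slist)
  then have "eqv (canon x) (canon y)" by (rule slist_eqv[OF cx(1) cy(1)])
  then show "eqv x y" using canon[OF x] canon[OF y] eqv_sym eqv_trans by blast
qed

definition dec :: "bool list \<Rightarrow> nat list" where
  "dec s = (SOME x. x \<in> lists \<Sigma> \<and> code x = s)"

lemma dec_code: "x \<in> lists \<Sigma> \<Longrightarrow> dec (code x) \<in> lists \<Sigma> \<and> eqv (dec (code x)) x"
proof -
  assume x: "x \<in> lists \<Sigma>"
  have "dec (code x) \<in> lists \<Sigma> \<and> code (dec (code x)) = code x"
    unfolding dec_def by (rule someI[of _ x]) (simp add: x)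
  then show ?thesis using code_eq[OF _ x] by blast
qed

definition alg :: "bool list stream_alg" where
  "alg = \<lparr>sinit = code [], sstep = (\<lambda>s a. case a of Some b \<Rightarrow> code (dec s @ [b]) | None \<Rightarrow> code (tl (dec s))),
          sacc = code ` lang \<Sigma> A, senc = id\<rparr>"

lemma invariant:
  "w \<in> lists (ext_alph \<Sigma>) \<Longrightarrow> wnd w \<in> lists \<Sigma> \<and> srun alg w = code (wnd w)"
proof (induction w rule: rev_induct)
  case Nil then show ?case by (simp add: wnd_def srun_def alg_def)
next
  case (snoc a w)
  then have IH: "wnd w \<in> lists \<Sigma>" "srun alg w = code (wnd w)" by auto
  have a: "a \<in> ext_alph \<Sigma>" using snoc.prems by simp
  define x where "x = wnd w"
  have d: "dec (code x) \<in> lists \<Sigma>" "eqv (dec (code x)) x" using dec_code IH(1) x_def by auto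
  show ?case
  proof (cases a)
    case None
    have t: "tl x \<in> lists \<Sigma>" using IH(1) x_def by (simp add: lists_tl)
    have "code (tl (dec (code x))) = code (tl x)"
      using code_eq[OF lists_tl[OF d(1)] t] eqv_tl[OF d(2)] by simp
    then show ?thesis using None IH t unfolding x_def by (simp add: wnd_snoc srun_snoc alg_def)
  next
    case (Some b)
    then have b: "b \<in> \<Sigma>" using a by (auto simp: ext_alph_def)
    have t: "x @ [b] \<in> lists \<Sigma>" using IH(1) x_def b by simp
    have "code (dec (code x) @ [b]) = code (x @ [b])"
      using code_eq[of "dec (code x) @ [b]" "x @ [b]"] eqv_snoc[OF d(1) _ b d(2)] d(1) t IH(1) x_def by simp
    then show ?thesis using Some IH t unfolding x_def by (simp add: wnd_snoc srun_snoc alg_def)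
  qed
qed

lemma sw_alg: "is_sw_alg \<Sigma> (lang \<Sigma> A) alg"
  unfolding is_sw_alg_def
proof (intro conjI ballI)
  show "inj (senc alg)" by (simp add: alg_def)
next
  fix w assume w: "w \<in> lists (ext_alph \<Sigma>)"
  have i: "wnd w \<in> lists \<Sigma>" "srun alg w = code (wnd w)" using invariant[OF w] by auto
  show "srun alg w \<in> sacc alg \<longleftrightarrow> wnd w \<in> lang \<Sigma> A"
  proof
    assume "srun alg w \<in> sacc alg"
    then obtain y where y: "y \<in> lang \<Sigma> A" "code (wnd w) = code y" using i by (auto simp: alg_def)
    have yl: "y \<in> lists \<Sigma>" using y(1) by (simp add: lang_def)
    have "eqv (wnd w) y" using code_eq[OF i(1) yl] y(2) by simp
    then show "wnd w \<in> lang \<Sigma> A" using eqv_lang[OF yl i(1) eqv_sym y(1)] by blast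
  next
    assume "wnd w \<in> lang \<Sigma> A"
    then show "srun alg w \<in> sacc alg" using i by (simp add: alg_def)
  qed
qed

lemma space_bound:
  assumes u: "u \<in> lists (ext_alph \<Sigma>)" and n: "\<forall>i\<le>length u. length (wnd (take i u)) \<le> n"
  shows "space alg u \<le> Suc (length gs * length ds) * Suc (floor_log (Suc n))"
proof -
  define S where "S = {length (senc alg (srun alg (take i u))) | i. i \<le> length u}"
  have fin: "finite S" unfolding S_def by (rule finite_image_set) simp
  have ne: "S \<noteq> {}" unfolding S_def by blast
  have "s \<le> Suc (length gs * length ds) * Suc (floor_log (Suc n))" if "s \<in> S" for s
  proof -
    obtain i where i: "i \<le> length u" "s = length (senc alg (srun alg (take i u)))" using \<open>s \<in> S\<close> S_def by blast
    have ti: "take i u \<in> lists (ext_alph \<Sigma>)" using lists_take[OF u] .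
    have iv: "wnd (take i u) \<in> lists \<Sigma>" "srun alg (take i u) = code (wnd (take i u))" using invariant[OF ti] by auto
    have "s = Suc (length gs * length ds) * Suc (floor_log (Suc (length (wnd (take i u)))))"
      using i(2) iv code_length[OF iv(1)] by (simp add: alg_def)
    moreover have "Suc (floor_log (Suc (length (wnd (take i u))))) \<le> Suc (floor_log (Suc n))"
      using n i(1) by (simp add: floor_log_le_iff)
    ultimately show ?thesis using mult_le_mono2 by metis
  qed
  then have "Max S \<le> Suc (length gs * length ds) * Suc (floor_log (Suc n))"
    using fin ne by (intro Max.boundedI) auto
  then show ?thesis unfolding space_def S_def by simp
qed

lemma V_bound: "V \<Sigma> (lang \<Sigma> A) n \<le> enat (Suc (length gs * length ds) * Suc (floor_log (Suc n)))"
proof -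
  have "v_space \<Sigma> alg n \<le> enat (Suc (length gs * length ds) * Suc (floor_log (Suc n)))"
    unfolding v_space_def by (rule SUP_least) (use space_bound in auto)
  then show ?thesis unfolding V_def by (rule INF_lower2[rotated]) (simp add: sw_alg)
qed

end



lemma gen:
  assumes nfa: "is_nfa \<Sigma> A" and wb: "well_behaved \<Sigma> (rd \<Sigma> A)" and X: "finite X"
    and inX: "\<forall>w\<in>lists \<Sigma>. steps A (init A) w \<in> X"
  shows "\<exists>E. E \<le> card X * card (dstates (rd \<Sigma> A)) \<and>
           (\<forall>n. V \<Sigma> (lang \<Sigma> A) n \<le> enat (Suc E * Suc (floor_log (Suc n))))"
proof -
  obtain ds where hds: "set ds = dstates (rd \<Sigma> A)" "distinct ds"
    using finite_distinct_list[OF finite_dstates[OF nfa]] by blast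
  obtain G where G: "G \<subseteq> dstates (rd \<Sigma> A)" "finite G" "card G \<le> card X"
    "\<forall>D1\<in>X. \<forall>D2\<in>X. (\<forall>P\<in>G. (D1 \<inter> P \<noteq> {}) = (D2 \<inter> P \<noteq> {})) \<longrightarrow>
        (\<forall>P\<in>dstates (rd \<Sigma> A). (D1 \<inter> P \<noteq> {}) = (D2 \<inter> P \<noteq> {}))"
    using sep_family[OF X, of "dstates (rd \<Sigma> A)" "\<lambda>D P. D \<inter> P \<noteq> {}"] by blast
  obtain gs where hgs: "set gs = G" "distinct gs" using finite_distinct_list[OF G(2)] by blast
  have sep: "\<forall>w1\<in>lists \<Sigma>. \<forall>w2\<in>lists \<Sigma>.
       (\<forall>P\<in>set gs. (steps A (init A) w1 \<inter> P \<noteq> {}) = (steps A (init A) w2 \<inter> P \<noteq> {})) \<longrightarrow>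
       (\<forall>P\<in>dstates (rd \<Sigma> A). (steps A (init A) w1 \<inter> P \<noteq> {}) = (steps A (init A) w2 \<inter> P \<noteq> {}))"
  proof (intro ballI impI)
    fix w1 w2 P assume w: "w1 \<in> lists \<Sigma>" "w2 \<in> lists \<Sigma>"
      "\<forall>P\<in>set gs. (steps A (init A) w1 \<inter> P \<noteq> {}) = (steps A (init A) w2 \<inter> P \<noteq> {})"
      "P \<in> dstates (rd \<Sigma> A)"
    have x1: "steps A (init A) w1 \<in> X" using inX w(1) by blast
    have x2: "steps A (init A) w2 \<in> X" using inX w(2) by blast
    have "\<forall>P\<in>dstates (rd \<Sigma> A). (steps A (init A) w1 \<inter> P \<noteq> {}) = (steps A (init A) w2 \<inter> P \<noteq> {})"
      using mp[OF bspec[OF bspec[OF G(4) x1] x2]] w(3)[unfolded hgs(1)] by blast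
    then show "(steps A (init A) w1 \<inter> P \<noteq> {}) = (steps A (init A) w2 \<inter> P \<noteq> {})" using w(4) by blast
  qed
  interpret swsetup \<Sigma> A gs ds
    by (rule swsetup.intro[OF nfa wb _ hds(1) sep]) (simp add: hgs(1) G(1))
  have lg: "length gs = card G" using distinct_card[OF hgs(2)] hgs(1) by simp
  have ld: "length ds = card (dstates (rd \<Sigma> A))" using distinct_card[OF hds(2)] hds(1) by simp
  have "length gs * length ds \<le> card X * card (dstates (rd \<Sigma> A))"
    using lg ld G(3) by simp
  then show ?thesis by (intro exI[of _ "length gs * length ds"] conjI allI V_bound)
qed

lemma final_arith:
  assumes V: "\<forall>n. V \<Sigma> L n \<le> enat (Suc E * Suc (floor_log (Suc n)))" and E: "E \<le> Em"
  shows "\<forall>\<^sub>F n in sequentially. \<exists>k. V \<Sigma> L n = enat k \<and>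
            real k \<le> real (Em + 1) * real (floor_log n) + 2 * (real Em + 1)"
  unfolding eventually_sequentially
proof (rule exI[of _ 1], intro allI impI)
  fix n :: nat assume n: "1 \<le> n"
  obtain k where k: "V \<Sigma> L n = enat k" using V enat_ile by blast
  have kb: "k \<le> Suc E * Suc (floor_log (Suc n))" using V k by (metis enat_ord_simps(1))
  have "Suc n \<le> 2 * n" using n by simp
  then have "floor_log (Suc n) \<le> floor_log (2 * n)" by (rule floor_log_le_iff)
  then have fl: "floor_log (Suc n) \<le> Suc (floor_log n)" using n by simp
  have "Suc E * Suc (floor_log (Suc n)) \<le> (Em + 1) * (floor_log n + 2)"
    using mult_le_mono[of "Suc E" "Em + 1" "Suc (floor_log (Suc n))" "floor_log n + 2"] E fl by simp
  then have "k \<le> (Em + 1) * floor_log n + 2 * (Em + 1)" using kb by (simp add: algebra_simps)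
  then have "real k \<le> real ((Em + 1) * floor_log n + 2 * (Em + 1))" by (simp only: of_nat_le_iff)
  then have "real k \<le> real (Em + 1) * real (floor_log n) + 2 * (real Em + 1)" by (simp add: algebra_simps)
  then show "\<exists>k. V \<Sigma> L n = enat k \<and> real k \<le> real (Em + 1) * real (floor_log n) + 2 * (real Em + 1)"
    using k by blast
qed

lemma dfa_steps:
  assumes dfa: "is_dfa \<Sigma> A" and w: "w \<in> lists \<Sigma>"
  shows "\<exists>q\<in>states A. steps A (init A) w = {q}"
  using w
proof (induction w rule: rev_induct)
  case Nil
  have "card (init A) = 1" "init A \<subseteq> states A" using dfa by (auto simp: is_dfa_def is_nfa_def)
  then show ?case by (metis card_1_singletonE insert_subset steps_Nil)
next
  case (snoc a w)
  then obtain q where q: "q \<in> states A" "steps A (init A) w = {q}" by auto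
  have a: "a \<in> \<Sigma>" using snoc.prems by simp
  have c: "card (trans A q a) = 1" "trans A q a \<subseteq> states A"
    using dfa q(1) a by (auto simp: is_dfa_def is_nfa_def)
  obtain q' where "trans A q a = {q'}" using c(1) card_1_singletonE by blast
  then show ?case using c(2) q(2) by (simp add: steps_snoc step_set_def)
qed

theorem theorem5p2:
  "\<exists>c d :: nat \<Rightarrow> real. \<forall>(\<Sigma> :: nat set) (A :: nfa) (L :: nat list set) (m :: nat).
     finite \<Sigma> \<and> is_nfa \<Sigma> A \<and> L = lang \<Sigma> A \<and> card (states A) = m \<and>
     well_behaved \<Sigma> (rd \<Sigma> A) \<longrightarrow>
       (is_dfa \<Sigma> A \<longrightarrow> (\<forall>\<^sub>F n in sequentially. \<exists>k. V \<Sigma> L n = enat k \<and>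
            real k \<le> real (2 ^ m * m + 1) * real (floor_log n) + c m)) \<and>
       (\<forall>\<^sub>F n in sequentially. \<exists>k. V \<Sigma> L n = enat k \<and>
            real k \<le> real (4 ^ m + 1) * real (floor_log n) + d m)"
proof (rule exI[of _ "\<lambda>m. 2 * (real (2 ^ m * m) + 1)"], rule exI[of _ "\<lambda>m. 2 * (real (4 ^ m) + 1)"], intro allI impI conjI)
  fix \<Sigma> A L m
  assume h: "finite \<Sigma> \<and> is_nfa \<Sigma> A \<and> L = lang \<Sigma> A \<and> card (states A) = m \<and> well_behaved \<Sigma> (rd \<Sigma> A)"
  then have nfa: "is_nfa \<Sigma> A" and L: "L = lang \<Sigma> A" and m: "card (states A) = m"
    and wb: "well_behaved \<Sigma> (rd \<Sigma> A)" by auto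
  have fs: "finite (states A)" using nfa by (simp add: is_nfa_def)
  have cd: "card (dstates (rd \<Sigma> A)) \<le> 2 ^ m" using card_dstates[OF nfa] m by simp
  {
    assume dfa: "is_dfa \<Sigma> A"
    have inX: "\<forall>w\<in>lists \<Sigma>. steps A (init A) w \<in> (\<lambda>q. {q}) ` states A"
      using dfa_steps[OF dfa] by blast
    obtain E where E: "E \<le> card ((\<lambda>q. {q}) ` states A) * card (dstates (rd \<Sigma> A))"
      "\<forall>n. V \<Sigma> (lang \<Sigma> A) n \<le> enat (Suc E * Suc (floor_log (Suc n)))"
      using gen[OF nfa wb finite_imageI[OF fs] inX] by blast
    have "card ((\<lambda>q. {q}) ` states A) \<le> m" using card_image_le[OF fs] m by metis
    then have "E \<le> 2 ^ m * m" using E(1) cd mult_le_mono by (metis mult.commute order_trans)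
    then show "\<forall>\<^sub>F n in sequentially. \<exists>k. V \<Sigma> L n = enat k \<and>
            real k \<le> real (2 ^ m * m + 1) * real (floor_log n) + 2 * (real (2 ^ m * m) + 1)"
      using final_arith[OF E(2)] L by blast
  }
  have inX: "\<forall>w\<in>lists \<Sigma>. steps A (init A) w \<in> Pow (states A)"
    using steps_states[OF nfa] nfa by (auto simp: is_nfa_def)
  obtain E where E: "E \<le> card (Pow (states A)) * card (dstates (rd \<Sigma> A))"
    "\<forall>n. V \<Sigma> (lang \<Sigma> A) n \<le> enat (Suc E * Suc (floor_log (Suc n)))"
    using gen[OF nfa wb _ inX] fs by blast
  have "card (Pow (states A)) = 2 ^ m" using card_Pow[OF fs] m by simp
  then have "E \<le> 2 ^ m * 2 ^ m" using E(1) cd by (metis mult_le_mono2 order_trans)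
  then have "E \<le> 4 ^ m" by (simp add: power_mult_distrib[symmetric])
  then show "\<forall>\<^sub>F n in sequentially. \<exists>k. V \<Sigma> L n = enat k \<and>
            real k \<le> real (4 ^ m + 1) * real (floor_log n) + 2 * (real (4 ^ m) + 1)"
    using final_arith[OF E(2)] L by blast
qed


end
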